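(* Let $X$ be a geodesic metric space which is a $(\tau,\eta)$-tight network with respect to a collection $\mathcal L$ of subsets. For every $M\ge0$ there exists $R=R(M)$ such that for every $L,L'\in\mathcal L$ with $\mathcal N_M(L)\cap\mathcal N_M(L')\neq\emptyset$ and any point $a\in\mathcal N_M(L)\cap\mathcal N_M(L')$, there exists a sequence $L_1=L,L_2,\dots,L_n=L'$ with $L_i\in\mathcal L$ and $n\le R$ such that for all $1\le i<n$, $\mathcal N_\tau(L_i)\cap\mathcal N_\tau(L_{i+1})$ has infinite diameter, is $\eta$-path connected, and intersects $B(a,R)$.
   Context: $\mathcal N_R(A)=\{z:\mathrm{dist}(z,A)<R\}$, $B(a,R)$ open ball. A $(\lambda,\kappa)$-quasi-geodesic satisfies $\frac1\lambda|s-t|-\kappa\le\mathrm{dist}(q(s),q(t))\le\lambda|s-t|+\kappa$. A subset $A$ is $(\tau,\eta)$-quasi-convex if any two of its points are joined by an $(\eta,\eta)$-quasi-geodesic in $\mathcal N_\tau(A)$, and $\eta$-path connected if any two of its points are joined by a path in $\mathcal N_\eta(A)$. $X$ is a $(\tau,\eta)$-tight network with respect to $\mathcal L$ if each $L\in\mathcal L$ (induced metric) is $(\tau,\eta)$-quasi-convex, $X=\bigcup_{L\in\mathcal L}\mathcal N_\tau(L)$, and for any $L,L'\in\mathcal L$ and any point $z$ such that $B(z,3\tau)$ meets both $L$ and $L'$, there is a sequence $L=L_1,\dots,L_k=L'$ in $\mathcal L$, $k\le\eta$, with each $\mathcal N_\tau(L_i)\cap\mathcal N_\tau(L_{i+1})$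 of infinite diameter, $\eta$-path connected and meeting $B(z,\eta)$. *)

theory Defs
  imports "HOL-Analysis.Analysis"
begin

text \<open>Open R-neighbourhood of a set: points at distance < R from some point of A
  (so the neighbourhood of the empty set is empty, matching dist(z,{}) = infinity).\<close>
definition nbhd :: "real \<Rightarrow> 'a::metric_space set \<Rightarrow> 'a set" where
  "nbhd R A = {z. \<exists>a\<in>A. dist z a < R}"

definition geodesic_space :: "'a::metric_space itself \<Rightarrow> bool" where
  "geodesic_space _ \<longleftrightarrow> (\<forall>x y::'a. \<exists>g::real \<Rightarrow> 'a. g 0 = x \<and> g (dist x y) = y \<and>
      (\<forall>s\<in>{0..dist x y}. \<forall>t\<in>{0..dist x y}. dist (g s) (g t) = \<bar>s - t\<bar>))"

definition quasi_geodesic :: "real \<Rightarrow> real \<Rightarrow> (real \<Rightarrow> 'a::metric_space) \<Rightarrow> real \<Rightarrow> real \<Rightarrow> bool" where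
  "quasi_geodesic lam kap q a b \<longleftrightarrow> (\<forall>s\<in>{a..b}. \<forall>t\<in>{a..b}.
      \<bar>s - t\<bar> / lam - kap \<le> dist (q s) (q t) \<and> dist (q s) (q t) \<le> lam * \<bar>s - t\<bar> + kap)"

definition quasi_convex :: "real \<Rightarrow> real \<Rightarrow> 'a::metric_space set \<Rightarrow> bool" where
  "quasi_convex tau eta A \<longleftrightarrow> (\<forall>x\<in>A. \<forall>y\<in>A. \<exists>q a b. a \<le> b \<and> q a = x \<and> q b = y \<and>
      quasi_geodesic eta eta q a b \<and> q ` {a..b} \<subseteq> nbhd tau A)"

definition path_connected_nbhd :: "real \<Rightarrow> 'a::metric_space set \<Rightarrow> bool" where
  "path_connected_nbhd eta A \<longleftrightarrow> (\<forall>x\<in>A. \<forall>y\<in>A. \<exists>g. path g \<and> pathstart g = x \<and>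
      pathfinish g = y \<and> path_image g \<subseteq> nbhd eta A)"

definition infinite_diameter :: "'a::metric_space set \<Rightarrow> bool" where
  "infinite_diameter S \<longleftrightarrow> \<not> bounded S"

definition good_chain :: "real \<Rightarrow> real \<Rightarrow> 'a::metric_space set set \<Rightarrow> 'a set \<Rightarrow>
    (nat \<Rightarrow> 'a set) \<Rightarrow> nat \<Rightarrow> bool" where
  "good_chain tau eta \<L> B Ls k \<longleftrightarrow> k \<ge> 1 \<and> (\<forall>i\<in>{1..k}. Ls i \<in> \<L>) \<and>
     (\<forall>i\<in>{1..<k}. infinite_diameter (nbhd tau (Ls i) \<inter> nbhd tau (Ls (Suc i))) \<and>
        path_connected_nbhd eta (nbhd tau (Ls i) \<inter> nbhd tau (Ls (Suc i))) \<and>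
        nbhd tau (Ls i) \<inter> nbhd tau (Ls (Suc i)) \<inter> B \<noteq> {})"

definition tight_network :: "real \<Rightarrow> real \<Rightarrow> 'a::metric_space set set \<Rightarrow> bool" where
  "tight_network tau eta \<L> \<longleftrightarrow>
     (\<forall>L\<in>\<L>. quasi_convex tau eta L) \<and>
     UNIV = (\<Union>L\<in>\<L>. nbhd tau L) \<and>
     (\<forall>L\<in>\<L>. \<forall>L'\<in>\<L>. \<forall>z. ball z (3*tau) \<inter> L \<noteq> {} \<and> ball z (3*tau) \<inter> L' \<noteq> {} \<longrightarrow>
        (\<exists>Ls k. Ls 1 = L \<and> Ls k = L' \<and> real k \<le> eta \<and> good_chain tau eta \<L> (ball z eta) Ls k))"

end

theory Submission
  imports Defs
begin

lemma good_chain_mono: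
  assumes "good_chain t e F B Ls k" "B \<subseteq> B'"
  shows "good_chain t e F B' Ls k"
  using assms unfolding good_chain_def by blast

lemma good_chain_concat:
  assumes A: "good_chain t e F B Ls k" and Bm: "good_chain t e F B Ms m" and E: "Ls k = Ms 1"
  shows "good_chain t e F B (\<lambda>i. if i \<le> k then Ls i else Ms (i + 1 - k)) (k + m - 1)
     \<and> (\<lambda>i. if i \<le> k then Ls i else Ms (i + 1 - k)) 1 = Ls 1
     \<and> (\<lambda>i. if i \<le> k then Ls i else Ms (i + 1 - k)) (k + m - 1) = Ms m"
proof -
  define C where "C = (\<lambda>i. if i \<le> k then Ls i else Ms (i + 1 - k))"
  define Q where "Q = (\<lambda>X Y. infinite_diameter (nbhd t X \<inter> nbhd t Y) \<and>
        path_connected_nbhd e (nbhd t X \<inter> nbhd t Y) \<and> nbhd t X \<inter> nbhd t Y \<inter> B \<noteq> {})"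
  have gc: "\<And>Ls k. good_chain t e F B Ls k \<longleftrightarrow> k \<ge> 1 \<and> (\<forall>i\<in>{1..k}. Ls i \<in> F) \<and>
      (\<forall>i\<in>{1..<k}. Q (Ls i) (Ls (Suc i)))"
    unfolding good_chain_def Q_def by blast
  from A have k1: "k \<ge> 1" and LF: "\<And>i. i\<in>{1..k} \<Longrightarrow> Ls i \<in> F"
    and LQ: "\<And>i. i\<in>{1..<k} \<Longrightarrow> Q (Ls i) (Ls (Suc i))" unfolding gc by auto
  from Bm have m1: "m \<ge> 1" and MF: "\<And>i. i\<in>{1..m} \<Longrightarrow> Ms i \<in> F"
    and MQ: "\<And>i. i\<in>{1..<m} \<Longrightarrow> Q (Ms i) (Ms (Suc i))" unfolding gc by auto
  have "good_chain t e F B C (k + m - 1)"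
    unfolding gc
  proof (intro conjI ballI)
    show "1 \<le> k + m - 1" using k1 m1 by simp
  next
    fix i assume i: "i \<in> {1..k + m - 1}"
    show "C i \<in> F"
    proof (cases "i \<le> k")
      case True thus ?thesis using i LF by (simp add: C_def)
    next
      case False
      have "i+1-k \<in> {1..m}" using i False by auto
      thus ?thesis using False MF by (simp add: C_def)
    qed
  next
    fix i assume i: "i \<in> {1..<k + m - 1}"
    consider "i < k" | "i = k" | "i > k" by linarith
    thus "Q (C i) (C (Suc i))"
    proof cases
      case 1 thus ?thesis using i LQ by (simp add: C_def)
    next
      case 2
      have "1 \<in> {1..<m}" using i 2 by auto
      hence "Q (Ms 1) (Ms (Suc 1))" using MQ by blast
      thus ?thesis using 2 E by (simp add: C_def numeral_2_eq_2)
    next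
      case 3
      have "i + 1 - k \<in> {1..<m}" using i 3 by auto
      hence "Q (Ms (i + 1 - k)) (Ms (Suc (i + 1 - k)))" using MQ by blast
      moreover have "Suc i + 1 - k = Suc (i + 1 - k)" using 3 by simp
      ultimately show ?thesis using 3 by (simp add: C_def)
    qed
  qed
  moreover have "C 1 = Ls 1" using k1 by (simp add: C_def)
  moreover have "C (k + m - 1) = Ms m"
  proof (cases "m = 1")
    case True thus ?thesis using E by (simp add: C_def)
  next
    case False
    hence "\<not> k + m - 1 \<le> k" "k + m - 1 + 1 - k = m" using k1 m1 by auto
    thus ?thesis by (simp add: C_def)
  qed
  ultimately show ?thesis unfolding C_def by simp
qed

theorem corollary4p7:
  fixes \<L> :: "'a::metric_space set set" and tau eta :: real
  assumes "geodesic_space TYPE('a)"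
    and "tight_network tau eta \<L>"
  shows "\<forall>M\<ge>0. \<exists>R. \<forall>L\<in>\<L>. \<forall>L'\<in>\<L>. \<forall>a\<in>nbhd M L \<inter> nbhd M L'.
           \<exists>Ls n. Ls 1 = L \<and> Ls n = L' \<and> real n \<le> R \<and> good_chain tau eta \<L> (ball a R) Ls n"
proof (intro allI impI)
  fix M :: real assume M0: "M \<ge> 0"
  have cover: "\<And>x::'a. \<exists>L\<in>\<L>. x \<in> nbhd tau L"
    using assms(2) unfolding tight_network_def by blast
  have tight: "\<And>L L' z. L \<in> \<L> \<Longrightarrow> L' \<in> \<L> \<Longrightarrow> ball z (3*tau) \<inter> L \<noteq> {} \<Longrightarrow> ball z (3*tau) \<inter> L' \<noteq> {} \<Longrightarrow>
        (\<exists>Ls k. Ls 1 = L \<and> Ls k = L' \<and> real k \<le> eta \<and> good_chain tau eta \<L> (ball z eta) Ls k)"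
    using assms(2) unfolding tight_network_def by blast
  have tau0: "tau > 0"
  proof -
    obtain L where "L \<in> \<L>" "(undefined::'a) \<in> nbhd tau L" using cover by blast
    then obtain y where "dist (undefined::'a) y < tau" unfolding nbhd_def by blast
    thus ?thesis using zero_le_dist[of "undefined::'a" y] by linarith
  qed
  define R where "R = 3*M + 1 + (2*M/tau + 3)*\<bar>eta\<bar> + \<bar>eta\<bar> + 1"
  show "\<exists>R. \<forall>L\<in>\<L>. \<forall>L'\<in>\<L>. \<forall>a\<in>nbhd M L \<inter> nbhd M L'.
           \<exists>Ls n. Ls 1 = L \<and> Ls n = L' \<and> real n \<le> R \<and> good_chain tau eta \<L> (ball a R) Ls n"
  proof (rule exI[of _ R], intro ballI)
    fix L L' a assume LL: "L \<in> \<L>" "L' \<in> \<L>" and a: "a \<in> nbhd M L \<inter> nbhd M L'"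
    obtain p where p: "p \<in> L" "dist a p < M" using a unfolding nbhd_def by blast
    obtain p' where p': "p' \<in> L'" "dist a p' < M" using a unfolding nbhd_def by blast
    have eta1: "eta \<ge> 1"
    proof -
      have "p \<in> ball p (3*tau) \<inter> L" using p tau0 by simp
      hence "ball p (3*tau) \<inter> L \<noteq> {}" by blast
      then obtain Ls k where "real k \<le> eta" "good_chain tau eta \<L> (ball p eta) Ls k"
        using tight[OF LL(1) LL(1)] by blast
      thus ?thesis unfolding good_chain_def by linarith
    qed
    define d where "d = dist p p'"
    have d2: "d < 2*M" using p p' dist_triangle2[of p p' a] unfolding d_def by (simp add: dist_commute)
    have d0: "d \<ge> 0" unfolding d_def by simp
    obtain g :: "real \<Rightarrow> 'a" where g0: "g 0 = p" and gd: "g d = p'"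
      and gdist: "\<And>s t. s\<in>{0..d} \<Longrightarrow> t\<in>{0..d} \<Longrightarrow> dist (g s) (g t) = \<bar>s - t\<bar>"
      using assms(1) unfolding geodesic_space_def d_def by blast
    define N where "N = nat \<lceil>d/tau\<rceil> + 1"
    have Npos: "real N > 0" unfolding N_def by simp
    have NgtD: "real N > d/tau" unfolding N_def by linarith
    have "real (nat \<lceil>d/tau\<rceil>) = real_of_int \<lceil>d/tau\<rceil>" using d0 tau0 by simp
    hence Nle: "real N \<le> d/tau + 2" unfolding N_def using ceiling_correct[of "d/tau"] by linarith
    define z where "z = (\<lambda>i::nat. g (d * real i / real N))"
    have tin: "\<And>i. i \<le> N \<Longrightarrow> d * real i / real N \<in> {0..d}"
    proof -
      fix i assume "i \<le> N"
      hence "real i / real N \<le> 1" using Npos by simp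
      hence "d * (real i / real N) \<le> d * 1" using d0 by (intro mult_left_mono) auto
      thus "d * real i / real N \<in> {0..d}" using d0 Npos by auto
    qed
    have z0: "z 0 = p" unfolding z_def using g0 by simp
    have zN: "z N = p'" unfolding z_def using gd Npos by simp
    have zp: "\<And>i. i \<le> N \<Longrightarrow> dist p (z i) \<le> d"
    proof -
      fix i assume i: "i \<le> N"
      have "dist p (z i) = \<bar>0 - d * real i / real N\<bar>"
        unfolding z_def using gdist[of 0 "d * real i / real N"] tin[OF i] g0 d0 by simp
      thus "dist p (z i) \<le> d" using tin[OF i] by simp
    qed
    have zstep: "\<And>i. Suc i \<le> N \<Longrightarrow> dist (z i) (z (Suc i)) < tau"
    proof -
      fix i assume i: "Suc i \<le> N"
      have "dist (z i) (z (Suc i)) = \<bar>d * real i / real N - d * real (Suc i) / real N\<bar>"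
        unfolding z_def using gdist tin[OF i] tin[of i] i by simp
      also have "\<dots> = d / real N" using Npos d0 by (simp add: field_simps)
      also have "\<dots> < tau"
      proof -
        have "d < tau * real N" using NgtD tau0 by (simp add: field_simps)
        thus ?thesis using Npos by (simp add: field_simps)
      qed
      finally show "dist (z i) (z (Suc i)) < tau" .
    qed
    have zball: "\<And>i. i \<le> N \<Longrightarrow> ball (z i) eta \<subseteq> ball a R"
    proof
      fix i y assume i: "i \<le> N" and y: "y \<in> ball (z i) eta"
      have "dist a y \<le> dist a p + dist p (z i) + dist (z i) y"
        using dist_triangle[of a y p] dist_triangle[of p y "z i"] by linarith
      also have "\<dots> < M + 2*M + eta" using p(2) zp[OF i] d2 y by (simp add: dist_commute)
      also have "\<dots> \<le> R"
      proof -
        have "(2*M/tau + 3)*\<bar>eta\<bar> \<ge> 0" using M0 tau0 by simp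
        thus ?thesis unfolding R_def using eta1 by linarith
      qed
      finally show "y \<in> ball a R" by simp
    qed
    have IND: "\<And>n. n \<le> N \<Longrightarrow> \<exists>Ls k. Ls 1 = L \<and> z n \<in> nbhd tau (Ls k) \<and> real k \<le> 1 + real n * eta
                  \<and> good_chain tau eta \<L> (ball a R) Ls k"
    proof -
      fix n show "n \<le> N \<Longrightarrow> \<exists>Ls k. Ls 1 = L \<and> z n \<in> nbhd tau (Ls k) \<and> real k \<le> 1 + real n * eta
                  \<and> good_chain tau eta \<L> (ball a R) Ls k"
      proof (induction n)
        case 0
        have "good_chain tau eta \<L> (ball a R) (\<lambda>_. L) 1"
          unfolding good_chain_def using LL by simp
        moreover have "z 0 \<in> nbhd tau L" using z0 p(1) tau0 unfolding nbhd_def by (intro CollectI bexI[of _ p]) auto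
        ultimately show ?case by (intro exI[of _ "\<lambda>_. L"] exI[of _ 1]) simp
      next
        case (Suc n)
        then obtain Ls k where H: "Ls 1 = L" "z n \<in> nbhd tau (Ls k)" "real k \<le> 1 + real n * eta"
          "good_chain tau eta \<L> (ball a R) Ls k" by auto
        have k1: "k \<ge> 1" and LkF: "Ls k \<in> \<L>" using H(4) unfolding good_chain_def by auto
        obtain L'' where L'': "L'' \<in> \<L>" "z (Suc n) \<in> nbhd tau L''" using cover by blast
        obtain q where q: "q \<in> Ls k" "dist (z n) q < tau" using H(2) unfolding nbhd_def by blast
        obtain q'' where q'': "q'' \<in> L''" "dist (z (Suc n)) q'' < tau" using L''(2) unfolding nbhd_def by blast
        have "dist (z n) q'' < 3*tau"
          using dist_triangle[of "z n" q'' "z (Suc n)"] zstep[OF Suc.prems] q'' tau0 by linarith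
        hence "q'' \<in> ball (z n) (3*tau) \<inter> L''" using q'' by simp
        hence b1: "ball (z n) (3*tau) \<inter> L'' \<noteq> {}" by blast
        have "q \<in> ball (z n) (3*tau) \<inter> Ls k" using q tau0 by simp
        hence b2: "ball (z n) (3*tau) \<inter> Ls k \<noteq> {}" by blast
        obtain Ms m where M: "Ms 1 = Ls k" "Ms m = L''" "real m \<le> eta"
          "good_chain tau eta \<L> (ball (z n) eta) Ms m"
          using tight[OF LkF L''(1) b2 b1] by blast
        have m1: "m \<ge> 1" using M(4) unfolding good_chain_def by auto
        have "good_chain tau eta \<L> (ball a R) Ms m"
          using good_chain_mono[OF M(4) zball] Suc.prems by simp
        from good_chain_concat[OF H(4) this M(1)[symmetric]] obtain C where
          C: "good_chain tau eta \<L> (ball a R) C (k + m - 1)" "C 1 = Ls 1" "C (k + m - 1) = Ms m"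
          by blast
        have "real (k + m - 1) = real k + real m - 1" using k1 m1 by simp
        also have "\<dots> \<le> 1 + real (Suc n) * eta" using H(3) M(3) eta1 by (simp add: algebra_simps)
        finally have "real (k + m - 1) \<le> 1 + real (Suc n) * eta" .
        thus ?case using C H(1) M(2) L''(2) by (intro exI[of _ C] exI[of _ "k + m - 1"]) simp
      qed
    qed
    obtain Ls k where H: "Ls 1 = L" "p' \<in> nbhd tau (Ls k)" "real k \<le> 1 + real N * eta"
          "good_chain tau eta \<L> (ball a R) Ls k" using IND[of N] zN by auto
    have k1: "k \<ge> 1" and LkF: "Ls k \<in> \<L>" using H(4) unfolding good_chain_def by auto
    obtain q where q: "q \<in> Ls k" "dist p' q < tau" using H(2) unfolding nbhd_def by blast
    have "q \<in> ball p' (3*tau) \<inter> Ls k" using q tau0 by simp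
    hence b2: "ball p' (3*tau) \<inter> Ls k \<noteq> {}" by blast
    have "p' \<in> ball p' (3*tau) \<inter> L'" using p' tau0 by simp
    hence b1: "ball p' (3*tau) \<inter> L' \<noteq> {}" by blast
    obtain Ms m where M: "Ms 1 = Ls k" "Ms m = L'" "real m \<le> eta"
      "good_chain tau eta \<L> (ball p' eta) Ms m"
      using tight[OF LkF LL(2) b2 b1] by blast
    have m1: "m \<ge> 1" using M(4) unfolding good_chain_def by auto
    have "good_chain tau eta \<L> (ball a R) Ms m"
      using good_chain_mono[OF M(4)] zball[of N] zN by simp
    from good_chain_concat[OF H(4) this M(1)[symmetric]] obtain C where
      C: "good_chain tau eta \<L> (ball a R) C (k + m - 1)" "C 1 = Ls 1" "C (k + m - 1) = Ms m"
      by blast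
    have "real (k + m - 1) = real k + real m - 1" using k1 m1 by simp
    also have "\<dots> \<le> (real N + 1) * eta" using H(3) M(3) by (simp add: algebra_simps)
    also have "\<dots> \<le> (d/tau + 3) * eta" using Nle eta1 by (intro mult_right_mono) auto
    also have "\<dots> \<le> (2*M/tau + 3) * eta"
    proof -
      have "d/tau \<le> 2*M/tau" using d2 tau0 by (simp add: divide_right_mono)
      thus ?thesis using eta1 by (intro mult_right_mono) auto
    qed
    also have "\<dots> \<le> R" unfolding R_def using eta1 M0 tau0 by simp
    finally have "real (k + m - 1) \<le> R" .
    thus "\<exists>Ls n. Ls 1 = L \<and> Ls n = L' \<and> real n \<le> R \<and> good_chain tau eta \<L> (ball a R) Ls n"
      using C H(1) M(2) by (intro exI[of _ C] exI[of _ "k + m - 1"]) simp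
  qed
qed

end
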